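(* If $n\ge1$ and $0\le m\le n$, then $\operatorname{diam}(Y_{n,m})=\lfloor n(m+1)/2\rfloor$.
   Context: For integers $n\ge1$, $m\ge0$, the Yoke graph $Y_{n,m}$ is the simple graph whose vertices are the tuples $v=(v_0,\dots,v_{m+1})$ with $v_0,v_{m+1}\in\mathbb{Z}_n$, $v_1,\dots,v_m\in\{0,1\}$, $\sum_{i=0}^{m+1}v_i\equiv0\pmod n$; $u\sim v$ iff there is $0\le i\le m$ with $u_j=v_j$ for $j\notin\{i,i+1\}$ and either ($u_i=v_i+1$, $u_{i+1}=v_{i+1}-1$) or ($u_i=v_i-1$, $u_{i+1}=v_{i+1}+1$), bucket entries (indices $0,m+1$) computed mod $n$. *)

theory Defs
  imports Main "HOL-Library.Extended_Nat"
begin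

text \<open>Vertices of the Yoke graph Y(n,m): integer lists v = [v_0, ..., v_(m+1)] of length m+2,
  with bucket entries v_0, v_(m+1) in Z_n represented by 0..n-1, interior entries in {0,1},
  and total sum divisible by n.\<close>
definition yoke_vert :: "nat \<Rightarrow> nat \<Rightarrow> int list \<Rightarrow> bool" where
  "yoke_vert n m v \<longleftrightarrow> length v = m + 2
     \<and> 0 \<le> v ! 0 \<and> v ! 0 < int n
     \<and> 0 \<le> v ! (m+1) \<and> v ! (m+1) < int n
     \<and> (\<forall>i\<in>{1..m}. v ! i \<in> {0, 1})
     \<and> sum_list v mod int n = 0"

definition yoke_entry :: "nat \<Rightarrow> nat \<Rightarrow> nat \<Rightarrow> int \<Rightarrow> int" where
  "yoke_entry n m j x = (if j = 0 \<or> j = m + 1 then x mod int n else x)"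

definition yoke_adj :: "nat \<Rightarrow> nat \<Rightarrow> int list \<Rightarrow> int list \<Rightarrow> bool" where
  "yoke_adj n m u v \<longleftrightarrow> yoke_vert n m u \<and> yoke_vert n m v \<and> u \<noteq> v \<and>
     (\<exists>i\<le>m. (\<forall>j<m+2. j \<noteq> i \<and> j \<noteq> i + 1 \<longrightarrow> u ! j = v ! j) \<and>
        ((u ! i = yoke_entry n m i (v ! i + 1) \<and> u ! (i+1) = yoke_entry n m (i+1) (v ! (i+1) - 1)) \<or>
         (u ! i = yoke_entry n m i (v ! i - 1) \<and> u ! (i+1) = yoke_entry n m (i+1) (v ! (i+1) + 1))))"

definition yoke_dist :: "nat \<Rightarrow> nat \<Rightarrow> int list \<Rightarrow> int list \<Rightarrow> enat" where
  "yoke_dist n m u v = (INF k \<in> {k. (yoke_adj n m ^^ k) u v}. enat k)"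

definition yoke_diam :: "nat \<Rightarrow> nat \<Rightarrow> enat" where
  "yoke_diam n m = (SUP p \<in> {(u, v). yoke_vert n m u \<and> yoke_vert n m v}. yoke_dist n m (fst p) (snd p))"

end

theory Submission imports Defs begin

definition yvalid :: "nat \<Rightarrow> (nat \<Rightarrow> int) \<Rightarrow> bool" where
  "yvalid m P \<longleftrightarrow> (\<forall>j<m. P (Suc j) - P j \<in> {0,1})"

definition yf :: "nat \<Rightarrow> nat \<Rightarrow> (nat \<Rightarrow> int) \<Rightarrow> nat \<Rightarrow> int" where
  "yf n m P j = (if j = 0 then P 0 mod int n else if j = m+1 then (- P m) mod int n else P j - P (j-1))"

definition yV :: "nat \<Rightarrow> nat \<Rightarrow> (nat \<Rightarrow> int) \<Rightarrow> int list" where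
  "yV n m P = map (yf n m P) [0..<m+2]"

definition ylift :: "int list \<Rightarrow> nat \<Rightarrow> int" where
  "ylift w j = (\<Sum>k\<le>j. w!k)"

lemma yV_len[simp]: "length (yV n m P) = m + 2"
  by (simp add: yV_def)

lemma yV_nth: "j < m + 2 \<Longrightarrow> yV n m P ! j = yf n m P j"
  by (simp add: yV_def del: upt_Suc)

lemma yV_cong: "(\<And>j. j \<le> m \<Longrightarrow> P j = Q j) \<Longrightarrow> yV n m P = yV n m Q"
  unfolding yV_def yf_def
  by (intro map_cong refl) auto

lemma yV_shift: "yV n m (\<lambda>j. P j + int n * t) = yV n m P"
  unfolding yV_def yf_def
proof (intro map_cong refl)
  fix j
  show "(if j = 0 then (P 0 + int n * t) mod int n else if j = m + 1 then - (P m + int n * t) mod int n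
         else P j + int n * t - (P (j - 1) + int n * t)) =
        (if j = 0 then P 0 mod int n else if j = m + 1 then - P m mod int n else P j - P (j - 1))"
  proof -
    have "- (P m + int n * t) = - P m + int n * (- t)" by simp
    then have "- (P m + int n * t) mod int n = - P m mod int n" by (metis mod_mult_self2 mult.commute)
    then show ?thesis by simp
  qed
qed

lemma telesc: "(\<Sum>i<k. P (Suc i) - P i) = P k - (P 0 :: int)"
  by (induction k) auto

lemma yV_vert:
  assumes n: "1 \<le> n" and v: "yvalid m P"
  shows "yoke_vert n m (yV n m P)"
proof -
  have s: "sum_list (yV n m P) = (\<Sum>j<m+2. yf n m P j)"
    unfolding yV_def by (simp add: interv_sum_list_conv_sum_set_nat atLeast0LessThan del: upt_Suc)
  have "(\<Sum>j<m+2. yf n m P j) = (\<Sum>j<Suc m. yf n m P j) + yf n m P (m+1)" by simp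
  also have "(\<Sum>j<Suc m. yf n m P j) = yf n m P 0 + (\<Sum>i<m. yf n m P (Suc i))"
    by (rule sum.lessThan_Suc_shift)
  also have "(\<Sum>i<m. yf n m P (Suc i)) = (\<Sum>i<m. P (Suc i) - P i)"
    by (intro sum.cong refl) (auto simp: yf_def)
  finally have "sum_list (yV n m P) = P 0 mod int n + (P m - P 0) + (- P m) mod int n"
    using s by (simp add: telesc yf_def)
  also have "\<dots> = int n * (- (P 0 div int n) - ((- P m) div int n))"
    by (simp add: algebra_simps minus_div_mult_eq_mod[symmetric] )
  finally have sm: "sum_list (yV n m P) mod int n = 0" by simp
  have int: "\<forall>i\<in>{1..m}. yV n m P ! i \<in> {0, 1}"
  proof
    fix i assume i: "i \<in> {1..m}"
    then obtain k where k: "i = Suc k" "k < m" by (cases i) auto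
    then show "yV n m P ! i \<in> {0,1}" using v by (simp add: yV_nth yf_def yvalid_def)
  qed
  show ?thesis unfolding yoke_vert_def using n sm int
    by (simp add: yV_nth yf_def)
qed


lemma ylift_Suc: "ylift w (Suc j) = ylift w j + w ! Suc j"
  by (simp add: ylift_def)

lemma ylift_0: "ylift w 0 = w ! 0"
  by (simp add: ylift_def)

lemma ylift_valid: "yoke_vert n m w \<Longrightarrow> yvalid m (ylift w)"
  unfolding yvalid_def yoke_vert_def by (auto simp: ylift_Suc)

lemma sum_list_lift: "length w = m + 2 \<Longrightarrow> sum_list w = ylift w m + w ! (m+1)"
  by (simp add: sum_list_sum_nth ylift_def atLeast0LessThan lessThan_Suc_atMost[symmetric])

lemma yV_ylift:
  assumes w: "yoke_vert n m w"
  shows "yV n m (ylift w) = w"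
proof (rule nth_equalityI)
  show "length (yV n m (ylift w)) = length w" using w by (simp add: yoke_vert_def)
  fix j assume "j < length (yV n m (ylift w))"
  then have j: "j < m + 2" by simp
  have len: "length w = m + 2" using w by (simp add: yoke_vert_def)
  consider "j = 0" | "j = m + 1" | k where "j = Suc k" "k < m" using j
    by (cases j) (auto, linarith)
  then show "yV n m (ylift w) ! j = w ! j"
  proof cases
    case 1
    then show ?thesis using w j by (simp add: yV_nth yf_def ylift_0 yoke_vert_def)
  next
    case 2
    have sm: "(ylift w m + w ! (m+1)) mod int n = 0"
      using w sum_list_lift[OF len] by (simp add: yoke_vert_def)
    have r: "0 \<le> w ! (m+1)" "w ! (m+1) < int n" using w by (auto simp: yoke_vert_def)
    have "(- ylift w m) mod int n = (- ylift w m + (ylift w m + w ! (m+1))) mod int n"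
      using sm by (metis add.right_neutral mod_add_right_eq)
    also have "\<dots> = w ! (m+1)" using r by simp
    finally show ?thesis using 2 by (simp add: yV_nth yf_def)
  next
    case 3
    then show ?thesis by (simp add: yV_nth yf_def ylift_Suc)
  qed
qed

lemma ylift_yV:
  assumes "0 \<le> P 0" "P 0 < int n" "j \<le> m"
  shows "ylift (yV n m P) j = P j"
  using assms(3)
proof (induction j)
  case 0
  then show ?case using assms by (simp add: ylift_0 yV_nth yf_def)
next
  case (Suc j)
  then show ?case by (simp add: ylift_Suc yV_nth yf_def)
qed

lemma yV_step:
  assumes n: "1 \<le> n" and v: "yvalid m P" and v': "yvalid m P'" and i: "i \<le> m"
    and P': "P' = P(i := P i + \<sigma>)" and s: "\<sigma> = 1 \<or> \<sigma> = -1"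
    and ne: "yV n m P \<noteq> yV n m P'"
  shows "yoke_adj n m (yV n m P) (yV n m P')"
proof -
  have A: "\<forall>j<m+2. j \<noteq> i \<and> j \<noteq> i + 1 \<longrightarrow> yV n m P ! j = yV n m P' ! j"
    using P' by (auto simp: yV_nth yf_def)
  have B: "yV n m P ! i = yoke_entry n m i (yV n m P' ! i - \<sigma>)"
    using P' i by (auto simp: yV_nth yf_def yoke_entry_def mod_diff_left_eq)
  have C: "yV n m P ! (i+1) = yoke_entry n m (i+1) (yV n m P' ! (i+1) + \<sigma>)"
    using P' i by (auto simp: yV_nth yf_def yoke_entry_def mod_add_left_eq)
  show ?thesis unfolding yoke_adj_def
    using yV_vert[OF n v] yV_vert[OF n v'] ne i A B C s by auto
qed


lemma yvalidD: "yvalid m P \<Longrightarrow> k < m \<Longrightarrow> P k \<le> P (Suc k) \<and> P (Suc k) \<le> P k + 1"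
  unfolding yvalid_def by (drule spec[of _ k]) auto

lemma sel_down_aux:
  assumes v: "yvalid m P" and vR: "yvalid m R" and le: "\<forall>j\<le>m. R j \<le> P j"
  shows "j \<le> m \<Longrightarrow> R j < P j \<Longrightarrow> (j = m \<or> P (Suc j) = P j) \<Longrightarrow>
     \<exists>i\<le>j. R i < P i \<and> (i = 0 \<or> P (i-1) < P i) \<and> (i = m \<or> P (Suc i) = P i)"
proof (induction j)
  case 0
  then show ?case by auto
next
  case (Suc j)
  show ?case
  proof (cases "P j < P (Suc j)")
    case True
    then show ?thesis using Suc.prems by (intro exI[of _ "Suc j"]) auto
  next
    case False
    have "P (Suc j) - P j \<in> {0,1}" using v Suc.prems unfolding yvalid_def by simp
    then have e: "P (Suc j) = P j" using False by auto
    have "R j \<le> R (Suc j)" using yvalidD[OF vR, of j] Suc.prems by simp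
    then have "R j < P j" using e Suc.prems by simp
    then obtain i where "i \<le> j" "R i < P i" "(i = 0 \<or> P (i-1) < P i) \<and> (i = m \<or> P (Suc i) = P i)"
      using Suc.IH Suc.prems e by auto
    then show ?thesis by (intro exI[of _ i]) auto
  qed
qed

lemma sel_down:
  assumes v: "yvalid m P" and vR: "yvalid m R" and le: "\<forall>j\<le>m. R j \<le> P j"
    and ex: "\<exists>j\<le>m. R j < P j"
  shows "\<exists>i\<le>m. R i < P i \<and> yvalid m (P(i := P i - 1))"
proof -
  define S where "S = {j. j \<le> m \<and> R j < P j}"
  have fS: "finite S" unfolding S_def by simp
  have neS: "S \<noteq> {}" using ex unfolding S_def by auto
  define j0 where "j0 = Max S"
  have j0S: "j0 \<in> S" using fS neS unfolding j0_def by simp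
  have mx: "\<And>j. j \<in> S \<Longrightarrow> j \<le> j0" using fS unfolding j0_def by simp
  have j0r: "j0 = m \<or> P (Suc j0) = P j0"
  proof (cases "j0 = m")
    case False
    then have lt: "j0 < m" using j0S unfolding S_def by auto
    have "Suc j0 \<notin> S" using mx by fastforce
    then have "R (Suc j0) = P (Suc j0)" using le lt unfolding S_def
      by (metis (mono_tags, lifting) Suc_leI mem_Collect_eq order_less_le)
    moreover have "R (Suc j0) \<le> R j0 + 1" "P j0 \<le> P (Suc j0)" using yvalidD[OF v lt] yvalidD[OF vR lt] by simp_all
    moreover have "R j0 < P j0" using j0S unfolding S_def by auto
    ultimately show ?thesis by simp
  qed simp
  obtain i where i: "i \<le> j0" "R i < P i" "i = 0 \<or> P (i-1) < P i" "i = m \<or> P (Suc i) = P i"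
    using sel_down_aux[OF v vR le, of j0] j0S j0r unfolding S_def by auto
  have im: "i \<le> m" using i j0S unfolding S_def by auto
  have "yvalid m (P(i := P i - 1))"
    unfolding yvalid_def
  proof (intro allI impI)
    fix k assume k: "k < m"
    have vk: "P (Suc k) - P k \<in> {0,1}" using v k unfolding yvalid_def by auto
    show "(P(i := P i - 1)) (Suc k) - (P(i := P i - 1)) k \<in> {0, 1}"
    proof (cases "k = i")
      case True
      then show ?thesis using i k by auto
    next
      case False
      show ?thesis
      proof (cases "Suc k = i")
        case True
        then show ?thesis using i vk False by auto
      next
        case False
        then show ?thesis using vk \<open>k \<noteq> i\<close> by auto
      qed
    qed
  qed
  then show ?thesis using i im by auto
qed

lemma sel_up_aux:
  assumes v: "yvalid m P" and vQ: "yvalid m Q" and le: "\<forall>j\<le>m. P j \<le> Q j"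
  shows "d = m - j \<Longrightarrow> j \<le> m \<Longrightarrow> P j < Q j \<Longrightarrow> (j = 0 \<or> P (j - 1) = P j) \<Longrightarrow>
     \<exists>i\<le>m. P i < Q i \<and> (i = 0 \<or> P (i-1) = P i) \<and> (i = m \<or> P (Suc i) = P i + 1)"
proof (induction d arbitrary: j)
  case 0
  then show ?case by auto
next
  case (Suc d)
  show ?case
  proof (cases "P (Suc j) = P j + 1")
    case True
    then show ?thesis using Suc.prems by (intro exI[of _ j]) auto
  next
    case False
    have jm: "j < m" using Suc.prems by simp
    then have e: "P (Suc j) = P j" using yvalidD[OF v jm] False by simp
    have "Q j \<le> Q (Suc j)" using yvalidD[OF vQ jm] by simp
    then have "P (Suc j) < Q (Suc j)" using e Suc.prems by simp
    then show ?thesis using Suc.IH[of "Suc j"] Suc.prems e jm by auto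
  qed
qed

lemma sel_up:
  assumes v: "yvalid m P" and vQ: "yvalid m Q" and le: "\<forall>j\<le>m. P j \<le> Q j"
    and ex: "\<exists>j\<le>m. P j < Q j"
  shows "\<exists>i\<le>m. P i < Q i \<and> yvalid m (P(i := P i + 1))"
proof -
  define S where "S = {j. j \<le> m \<and> P j < Q j}"
  have fS: "finite S" unfolding S_def by simp
  have neS: "S \<noteq> {}" using ex unfolding S_def by auto
  define j0 where "j0 = Min S"
  have j0S: "j0 \<in> S" using fS neS unfolding j0_def by simp
  have mn: "\<And>j. j \<in> S \<Longrightarrow> j0 \<le> j" using fS unfolding j0_def by simp
  have j0r: "j0 = 0 \<or> P (j0 - 1) = P j0"
  proof (cases j0)
    case (Suc k)
    have km: "k < m" using j0S Suc unfolding S_def by auto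
    have "k \<notin> S" using mn Suc by fastforce
    then have "Q k = P k" using le km unfolding S_def
      by (metis (mono_tags, lifting) less_imp_le mem_Collect_eq order_less_le)
    moreover have "Q (Suc k) \<le> Q k + 1" "P k \<le> P (Suc k)" using yvalidD[OF v km] yvalidD[OF vQ km] by simp_all
    moreover have "P (Suc k) < Q (Suc k)" using j0S Suc unfolding S_def by auto
    ultimately show ?thesis using Suc by simp
  qed simp
  obtain i where i: "i \<le> m" "P i < Q i" "i = 0 \<or> P (i-1) = P i" "i = m \<or> P (Suc i) = P i + 1"
    using sel_up_aux[OF v vQ le refl, of j0] j0S j0r unfolding S_def by auto
  have "yvalid m (P(i := P i + 1))"
    unfolding yvalid_def
  proof (intro allI impI)
    fix k assume k: "k < m"
    have vk: "P (Suc k) - P k \<in> {0,1}" using v k unfolding yvalid_def by auto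
    show "(P(i := P i + 1)) (Suc k) - (P(i := P i + 1)) k \<in> {0, 1}"
    proof (cases "k = i")
      case True
      then show ?thesis using i k by auto
    next
      case False
      show ?thesis
      proof (cases "Suc k = i")
        case True
        then show ?thesis using i vk False by auto
      next
        case False
        then show ?thesis using vk \<open>k \<noteq> i\<close> by auto
      qed
    qed
  qed
  then show ?thesis using i by auto
qed


lemma sum_upd: "i \<le> (m::nat) \<Longrightarrow> (\<Sum>j\<le>m. (P(i := P i + c)) j - R j) = (\<Sum>j\<le>m. P j - R j) + (c::int)"
proof -
  assume i: "i \<le> m"
  have "(\<Sum>j\<le>m. (P(i := P i + c)) j - R j) = (\<Sum>j\<le>m. (P j - R j) + (if j = i then c else 0))"
    by (intro sum.cong) auto
  also have "\<dots> = (\<Sum>j\<le>m. P j - R j) + c" using i by (simp add: sum.distrib sum.delta)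
  finally show ?thesis .
qed

lemma sum_pos_ex:
  fixes P R :: "nat \<Rightarrow> int"
  assumes "\<forall>j\<le>m. R j \<le> P j" "(\<Sum>j\<le>m. P j - R j) \<le> (0::int)"
  shows "\<forall>j\<le>m. P j = R j"
proof (intro allI impI)
  fix j assume j: "j \<le> m"
  have "P j - R j \<le> (\<Sum>j\<le>m. P j - R j)"
  proof (rule member_le_sum)
    show "j \<in> {..m}" using j by simp
    show "finite {..m}" by simp
    fix x assume "x \<in> {..m} - {j}"
    then show "0 \<le> P x - R x" using assms(1) by simp
  qed
  moreover have "R j \<le> P j" using assms(1) j by simp
  ultimately show "P j = R j" using assms(2) by linarith
qed

lemma path_down:
  assumes n: "1 \<le> n" and vR: "yvalid m R"
  shows "\<And>P. yvalid m P \<Longrightarrow> (\<forall>j\<le>m. R j \<le> P j) \<Longrightarrow> (\<Sum>j\<le>m. P j - R j) \<le> int N \<Longrightarrow>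
     \<exists>k\<le>N. (yoke_adj n m ^^ k) (yV n m P) (yV n m R)"
proof (induction N)
  case 0
  have "\<forall>j\<le>m. P j = R j"
  proof (rule sum_pos_ex)
    show "\<forall>j\<le>m. R j \<le> P j" using 0(2) .
    show "(\<Sum>j\<le>m. P j - R j) \<le> 0" using 0(3) by simp
  qed
  then have "yV n m P = yV n m R" by (intro yV_cong) auto
  then show ?case by (intro exI[of _ 0]) auto
next
  case (Suc N)
  show ?case
  proof (cases "\<forall>j\<le>m. P j = R j")
    case True
    then have "yV n m P = yV n m R" by (intro yV_cong) auto
    then show ?thesis by (intro exI[of _ 0]) auto
  next
    case False
    then obtain j0 where j0: "j0 \<le> m" "P j0 \<noteq> R j0" by auto
    then have "R j0 < P j0" using Suc.prems(2) by (simp add: order_less_le)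
    then have "\<exists>j\<le>m. R j < P j" using j0 by blast
    then obtain i where i: "i \<le> m" "R i < P i" and v': "yvalid m (P(i := P i + (-1)))"
      using sel_down[OF Suc.prems(1) vR Suc.prems(2)] by auto
    define P' where "P' = P(i := P i + (-1))"
    have v'': "yvalid m P'" using v' unfolding P'_def .
    have le': "\<forall>j\<le>m. R j \<le> P' j" using Suc.prems(2) i unfolding P'_def by auto
    have sm: "(\<Sum>j\<le>m. P' j - R j) \<le> int N" using sum_upd[OF i(1), of P "-1" R] Suc.prems(3)
      unfolding P'_def by simp
    then obtain k where k: "k \<le> N" "(yoke_adj n m ^^ k) (yV n m P') (yV n m R)"
      using Suc.IH[OF v'' le' sm] by blast
    show ?thesis
    proof (cases "yV n m P = yV n m P'")
      case True
      then show ?thesis using k by (intro exI[of _ k]) auto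
    next
      case False
      then have "yoke_adj n m (yV n m P) (yV n m P')"
        using yV_step[OF n Suc.prems(1) v'' i(1) P'_def _ False] by simp
      then have "(yoke_adj n m ^^ Suc k) (yV n m P) (yV n m R)" by (rule relpowp_Suc_I2[OF _ k(2)])
      then show ?thesis using k(1) by (intro exI[of _ "Suc k"]) auto
    qed
  qed
qed

lemma path_up:
  assumes n: "1 \<le> n" and vQ: "yvalid m Q"
  shows "\<And>P. yvalid m P \<Longrightarrow> (\<forall>j\<le>m. P j \<le> Q j) \<Longrightarrow> (\<Sum>j\<le>m. Q j - P j) \<le> int N \<Longrightarrow>
     \<exists>k\<le>N. (yoke_adj n m ^^ k) (yV n m P) (yV n m Q)"
proof (induction N)
  case 0
  have "\<forall>j\<le>m. Q j = P j"
  proof (rule sum_pos_ex)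
    show "\<forall>j\<le>m. P j \<le> Q j" using 0(2) .
    show "(\<Sum>j\<le>m. Q j - P j) \<le> 0" using 0(3) by simp
  qed
  then have "yV n m P = yV n m Q" by (intro yV_cong) auto
  then show ?case by (intro exI[of _ 0]) auto
next
  case (Suc N)
  show ?case
  proof (cases "\<forall>j\<le>m. P j = Q j")
    case True
    then have "yV n m P = yV n m Q" by (intro yV_cong) auto
    then show ?thesis by (intro exI[of _ 0]) auto
  next
    case False
    then obtain j0 where j0: "j0 \<le> m" "P j0 \<noteq> Q j0" by auto
    then have "P j0 < Q j0" using Suc.prems(2) by (simp add: order_less_le)
    then have "\<exists>j\<le>m. P j < Q j" using j0 by blast
    then obtain i where i: "i \<le> m" "P i < Q i" and v': "yvalid m (P(i := P i + 1))"
      using sel_up[OF Suc.prems(1) vQ Suc.prems(2)] by auto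
    define P' where "P' = P(i := P i + 1)"
    have v'': "yvalid m P'" using v' unfolding P'_def .
    have le': "\<forall>j\<le>m. P' j \<le> Q j" using Suc.prems(2) i unfolding P'_def by auto
    have "(\<Sum>j\<le>m. Q j - P' j) = - (\<Sum>j\<le>m. P' j - Q j)" by (simp add: sum_negf[symmetric])
    also have "\<dots> = (\<Sum>j\<le>m. Q j - P j) - 1" using sum_upd[OF i(1), of P 1 Q]
      unfolding P'_def by (simp add: sum_negf[symmetric])
    finally have sm: "(\<Sum>j\<le>m. Q j - P' j) \<le> int N" using Suc.prems(3) by simp
    then obtain k where k: "k \<le> N" "(yoke_adj n m ^^ k) (yV n m P') (yV n m Q)"
      using Suc.IH[OF v'' le' sm] by blast
    show ?thesis
    proof (cases "yV n m P = yV n m P'")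
      case True
      then show ?thesis using k by (intro exI[of _ k]) auto
    next
      case False
      then have "yoke_adj n m (yV n m P) (yV n m P')"
        using yV_step[OF n Suc.prems(1) v'' i(1) P'_def _ False] by simp
      then have "(yoke_adj n m ^^ Suc k) (yV n m P) (yV n m Q)" by (rule relpowp_Suc_I2[OF _ k(2)])
      then show ?thesis using k(1) by (intro exI[of _ "Suc k"]) auto
    qed
  qed
qed


lemma lip:
  fixes d :: "nat \<Rightarrow> int"
  assumes L: "\<forall>j<m. \<bar>d (Suc j) - d j\<bar> \<le> 1"
  shows "a \<le> b \<Longrightarrow> b \<le> m \<Longrightarrow> \<bar>d b - d a\<bar> \<le> int b - int a"
proof (induction b)
  case 0
  then show ?case by simp
next
  case (Suc b)
  show ?case
  proof (cases "a = Suc b")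
    case True
    then show ?thesis by simp
  next
    case False
    then have "a \<le> b" using Suc.prems by simp
    then have "\<bar>d b - d a\<bar> \<le> int b - int a" using Suc by simp
    moreover have "\<bar>d (Suc b) - d b\<bar> \<le> 1" using L Suc.prems by simp
    ultimately show ?thesis by simp
  qed
qed

lemma sum_rev_atMost: "(\<Sum>j\<le>(m::nat). g j) = (\<Sum>j\<le>m. g (m - j))"
  by (rule sum.reindex_bij_witness[where i="\<lambda>i. m - i" and j="\<lambda>i. m - i"]) auto

lemma sum_dist_bound: "j0 \<le> m \<Longrightarrow> 2 * (\<Sum>j\<le>m. \<bar>int j - int j0\<bar>) \<le> int m * (int m + 1)"
proof -
  assume j0: "j0 \<le> m"
  have "(\<Sum>j\<le>m. \<bar>int j - int j0\<bar>) = (\<Sum>j\<le>m. \<bar>int (m - j) - int j0\<bar>)"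
    by (rule sum_rev_atMost)
  then have "2 * (\<Sum>j\<le>m. \<bar>int j - int j0\<bar>) = (\<Sum>j\<le>m. \<bar>int j - int j0\<bar> + \<bar>int (m - j) - int j0\<bar>)"
    by (simp add: sum.distrib)
  also have "\<dots> \<le> (\<Sum>j\<le>m. int m)"
    by (intro sum_mono) (use j0 in auto)
  also have "\<dots> = int m * (int m + 1)" by simp
  finally show ?thesis .
qed

lemma comb:
  fixes d :: "nat \<Rightarrow> int"
  assumes n: "1 \<le> n" and mn: "m \<le> n" and L: "\<forall>j<m. \<bar>d (Suc j) - d j\<bar> \<le> 1"
  shows "\<exists>t. 2 * (\<Sum>j\<le>m. \<bar>d j - int n * t\<bar>) \<le> int n * (int m + 1)"
proof (cases "\<exists>j0\<le>m. \<exists>t. d j0 = int n * t")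
  case True
  then obtain j0 t where j0: "j0 \<le> m" "d j0 = int n * t" by auto
  have "(\<Sum>j\<le>m. \<bar>d j - int n * t\<bar>) \<le> (\<Sum>j\<le>m. \<bar>int j - int j0\<bar>)"
  proof (intro sum_mono)
    fix j assume j: "j \<in> {..m}"
    show "\<bar>d j - int n * t\<bar> \<le> \<bar>int j - int j0\<bar>"
    proof (cases "j0 \<le> j")
      case True
      then show ?thesis using lip[OF L True] j j0 by simp
    next
      case False
      then show ?thesis using lip[OF L, of j j0] j j0 by simp
    qed
  qed
  then have "2 * (\<Sum>j\<le>m. \<bar>d j - int n * t\<bar>) \<le> int m * (int m + 1)"
    using sum_dist_bound[OF j0(1)] by linarith
  also have "\<dots> \<le> int n * (int m + 1)" using mn by (intro mult_right_mono) auto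
  finally show ?thesis by blast
next
  case False
  define q where "q = d 0 div int n"
  have np: "int n > 0" using n by simp
  have inside: "j \<le> m \<Longrightarrow> int n * q < d j \<and> d j < int n * q + int n" for j
  proof (induction j)
    case 0
    have "int n * q \<le> d 0" unfolding q_def using np
      by (metis mult.commute div_mult_mod_eq le_add_same_cancel1 pos_mod_sign)
    moreover have "d 0 < int n * q + int n" unfolding q_def using np
      by (metis add.commute mult.commute add_less_cancel_left div_mult_mod_eq pos_mod_bound)
    moreover have "d 0 \<noteq> int n * q" using False by auto
    ultimately show ?case by simp
  next
    case (Suc j)
    have a: "int n * q < d j \<and> d j < int n * q + int n" using Suc by simp
    have b: "\<bar>d (Suc j) - d j\<bar> \<le> 1" using L Suc.prems by simp
    have c: "d (Suc j) \<noteq> int n * q" "d (Suc j) \<noteq> int n * (q + 1)" using False Suc.prems by blast+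
    show ?case using a b c by (auto simp: algebra_simps)
  qed
  have "(\<Sum>j\<le>m. \<bar>d j - int n * q\<bar>) + (\<Sum>j\<le>m. \<bar>d j - int n * (q+1)\<bar>) = (\<Sum>j\<le>m. int n)"
    unfolding sum.distrib[symmetric]
  proof (intro sum.cong refl)
    fix x assume "x \<in> {..m}"
    then have h: "int n * q < d x" "d x < int n * q + int n" using inside by auto
    have "\<bar>d x - int n * q\<bar> = d x - int n * q" using h by simp
    moreover have "\<bar>d x - int n * (q + 1)\<bar> = int n * q + int n - d x" using h by (simp add: algebra_simps)
    ultimately show "\<bar>d x - int n * q\<bar> + \<bar>d x - int n * (q + 1)\<bar> = int n" by simp
  qed
  also have "\<dots> = int n * (int m + 1)" by (simp add: algebra_simps)
  finally have "(\<Sum>j\<le>m. \<bar>d j - int n * q\<bar>) + (\<Sum>j\<le>m. \<bar>d j - int n * (q+1)\<bar>) = int n * (int m + 1)" .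
  then have "2 * (\<Sum>j\<le>m. \<bar>d j - int n * q\<bar>) \<le> int n * (int m + 1) \<or>
     2 * (\<Sum>j\<le>m. \<bar>d j - int n * (q+1)\<bar>) \<le> int n * (int m + 1)" by linarith
  then show ?thesis by blast
qed


lemma upper:
  assumes n: "1 \<le> n" and mn: "m \<le> n" and u: "yoke_vert n m u" and v: "yoke_vert n m v"
  shows "\<exists>k. 2 * int k \<le> int n * (int m + 1) \<and> (yoke_adj n m ^^ k) u v"
proof -
  define P where "P = ylift u"
  define Q where "Q = ylift v"
  have vP: "yvalid m P" and vQ: "yvalid m Q" unfolding P_def Q_def using ylift_valid u v by auto
  have L: "\<forall>j<m. \<bar>(Q (Suc j) - P (Suc j)) - (Q j - P j)\<bar> \<le> 1"
  proof (intro allI impI)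
    fix j assume j: "j < m"
    show "\<bar>(Q (Suc j) - P (Suc j)) - (Q j - P j)\<bar> \<le> 1"
      using yvalidD[OF vP j] yvalidD[OF vQ j] by linarith
  qed
  obtain t where t: "2 * (\<Sum>j\<le>m. \<bar>(Q j - P j) - int n * t\<bar>) \<le> int n * (int m + 1)"
    using comb[OF n mn L] by blast
  define P' where "P' = (\<lambda>j. P j + int n * t)"
  define M where "M = (\<lambda>j. min (P' j) (Q j))"
  have vP': "yvalid m P'" using vP unfolding yvalid_def P'_def by simp
  have vM: "yvalid m M" unfolding yvalid_def
  proof (intro allI impI)
    fix j assume j: "j < m"
    have "P' j \<le> P' (Suc j) \<and> P' (Suc j) \<le> P' j + 1" using yvalidD[OF vP' j] .
    moreover have "Q j \<le> Q (Suc j) \<and> Q (Suc j) \<le> Q j + 1" using yvalidD[OF vQ j] .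
    ultimately show "M (Suc j) - M j \<in> {0, 1}" unfolding M_def by auto
  qed
  define N1 where "N1 = nat (\<Sum>j\<le>m. P' j - M j)"
  define N2 where "N2 = nat (\<Sum>j\<le>m. Q j - M j)"
  have s1: "(\<Sum>j\<le>m. P' j - M j) \<le> int N1" unfolding N1_def by simp
  have s2: "(\<Sum>j\<le>m. Q j - M j) \<le> int N2" unfolding N2_def by simp
  obtain k1 where k1: "k1 \<le> N1" "(yoke_adj n m ^^ k1) (yV n m P') (yV n m M)"
    using path_down[OF n vM vP' _ s1] unfolding M_def by auto
  obtain k2 where k2: "k2 \<le> N2" "(yoke_adj n m ^^ k2) (yV n m M) (yV n m Q)"
    using path_up[OF n vQ vM _ s2] unfolding M_def by auto
  have eu: "yV n m P' = u" unfolding P'_def P_def using yV_shift yV_ylift[OF u] by simp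
  have ev: "yV n m Q = v" unfolding Q_def using yV_ylift[OF v] by simp
  have "(yoke_adj n m ^^ (k1 + k2)) u v"
    unfolding relpowp_add using k1(2) k2(2) eu ev by auto
  moreover have "int N1 + int N2 = (\<Sum>j\<le>m. \<bar>(Q j - P j) - int n * t\<bar>)"
  proof -
    have p1: "0 \<le> (\<Sum>j\<le>m. P' j - M j)" by (intro sum_nonneg) (simp add: M_def)
    have p2: "0 \<le> (\<Sum>j\<le>m. Q j - M j)" by (intro sum_nonneg) (simp add: M_def)
    have "int N1 + int N2 = (\<Sum>j\<le>m. P' j - M j) + (\<Sum>j\<le>m. Q j - M j)"
      unfolding N1_def N2_def using p1 p2 by simp
    also have "\<dots> = (\<Sum>j\<le>m. \<bar>(Q j - P j) - int n * t\<bar>)"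
      unfolding sum.distrib[symmetric]
      by (intro sum.cong refl) (simp add: M_def P'_def abs_if min_def)
    finally show ?thesis .
  qed
  ultimately show ?thesis using t k1(1) k2(1) by (intro exI[of _ "k1 + k2"]) auto
qed


lemma adj_lift:
  assumes n: "1 \<le> n" and a: "yoke_adj n m u v"
  shows "\<exists>i\<le>m. \<exists>\<sigma> s. \<bar>\<sigma>\<bar> \<le> 1 \<and> (\<forall>j\<le>m. ylift u j = ylift v j + (if j = i then \<sigma> else 0) + int n * s)"
proof -
  obtain i where i: "i \<le> m" and A: "\<forall>j<m+2. j \<noteq> i \<and> j \<noteq> i + 1 \<longrightarrow> u ! j = v ! j"
    and B: "(u ! i = yoke_entry n m i (v ! i + 1) \<and> u ! (i+1) = yoke_entry n m (i+1) (v ! (i+1) - 1)) \<or>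
         (u ! i = yoke_entry n m i (v ! i - 1) \<and> u ! (i+1) = yoke_entry n m (i+1) (v ! (i+1) + 1))"
    using a unfolding yoke_adj_def by blast
  have "\<exists>\<sigma>::int. (\<sigma> = 1 \<or> \<sigma> = -1) \<and> u ! i = yoke_entry n m i (v ! i + \<sigma>) \<and> u ! (i+1) = yoke_entry n m (i+1) (v ! (i+1) - \<sigma>)"
    using B
  proof (elim disjE)
    assume h: "u ! i = yoke_entry n m i (v ! i + 1) \<and> u ! (i+1) = yoke_entry n m (i+1) (v ! (i+1) - 1)"
    show ?thesis by (rule exI[of _ 1]) (use h in simp)
  next
    assume h: "u ! i = yoke_entry n m i (v ! i - 1) \<and> u ! (i+1) = yoke_entry n m (i+1) (v ! (i+1) + 1)"
    show ?thesis by (rule exI[of _ "-1"]) (use h in simp)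
  qed
  then obtain \<sigma> :: int where sg: "\<sigma> = 1 \<or> \<sigma> = -1"
    and B1: "u ! i = yoke_entry n m i (v ! i + \<sigma>)" and B2: "u ! (i+1) = yoke_entry n m (i+1) (v ! (i+1) - \<sigma>)"
    by blast
  define s0 where "s0 = (if i = 0 then - ((v ! 0 + \<sigma>) div int n) else 0)"
  have D: "u ! k = v ! k + (if k = i then \<sigma> + int n * s0 else 0) + (if k = i + 1 then - \<sigma> else 0)"
    if k: "k \<le> m" for k
  proof (cases "k = i")
    case True
    show ?thesis
    proof (cases "i = 0")
      case True
      have "u ! 0 = (v ! 0 + \<sigma>) mod int n" using B1 True by (simp add: yoke_entry_def)
      also have "\<dots> = v ! 0 + \<sigma> - int n * ((v ! 0 + \<sigma>) div int n)"
        by (simp add: minus_div_mult_eq_mod[symmetric] algebra_simps)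
      finally show ?thesis using True \<open>k = i\<close> by (simp add: s0_def)
    next
      case False
      then show ?thesis using B1 \<open>k = i\<close> i by (simp add: yoke_entry_def s0_def)
    qed
  next
    case False
    show ?thesis
    proof (cases "k = i + 1")
      case True
      then show ?thesis using B2 k by (simp add: yoke_entry_def)
    next
      case False
      have "k < m + 2" using k by simp
      then have "u ! k = v ! k" using A \<open>k \<noteq> i\<close> False by blast
      then show ?thesis using \<open>k \<noteq> i\<close> False by simp
    qed
  qed
  have "ylift u j = ylift v j + (if j = i then \<sigma> else 0) + int n * s0" if j: "j \<le> m" for j
  proof -
    have "ylift u j = (\<Sum>k\<le>j. v ! k + (if k = i then \<sigma> + int n * s0 else 0) + (if k = i + 1 then - \<sigma> else 0))"
      unfolding ylift_def using j D by (intro sum.cong refl) auto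
    also have "\<dots> = ylift v j + (if i \<le> j then \<sigma> + int n * s0 else 0) + (if i + 1 \<le> j then - \<sigma> else 0)"
      by (simp add: sum.distrib ylift_def sum.delta)
    also have "\<dots> = ylift v j + (if j = i then \<sigma> else 0) + int n * s0"
      by (auto simp: s0_def)
    finally show ?thesis .
  qed
  then show ?thesis using i sg by (intro exI[of _ i] conjI exI[of _ \<sigma>] exI[of _ s0]) auto
qed

lemma pot:
  assumes n: "1 \<le> n"
  shows "(yoke_adj n m ^^ k) a b \<Longrightarrow> \<exists>t'. (\<Sum>j\<le>m. \<bar>ylift b j - int n * t'\<bar>) \<le> (\<Sum>j\<le>m. \<bar>ylift a j - int n * t\<bar>) + int k"
proof (induction k arbitrary: b)
  case 0
  then show ?case by (intro exI[of _ t]) auto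
next
  case (Suc k)
  obtain b0 where b0: "(yoke_adj n m ^^ k) a b0" "yoke_adj n m b0 b"
    using Suc.prems by (rule relpowp_Suc_E)
  obtain t' where t': "(\<Sum>j\<le>m. \<bar>ylift b0 j - int n * t'\<bar>) \<le> (\<Sum>j\<le>m. \<bar>ylift a j - int n * t\<bar>) + int k"
    using Suc.IH[OF b0(1)] by blast
  obtain i \<sigma> s where i: "i \<le> m" "\<bar>\<sigma>\<bar> \<le> 1"
    and e: "\<forall>j\<le>m. ylift b0 j = ylift b j + (if j = i then \<sigma> else 0) + int n * s"
    using adj_lift[OF n b0(2)] by blast
  have "(\<Sum>j\<le>m. \<bar>ylift b j - int n * (t' - s)\<bar>) \<le> (\<Sum>j\<le>m. \<bar>ylift b0 j - int n * t'\<bar> + (if j = i then 1 else 0))"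
  proof (intro sum_mono)
    fix j assume "j \<in> {..m}"
    then have "ylift b j - int n * (t' - s) = (ylift b0 j - int n * t') - (if j = i then \<sigma> else 0)"
      using e by (simp add: algebra_simps)
    then show "\<bar>ylift b j - int n * (t' - s)\<bar> \<le> \<bar>ylift b0 j - int n * t'\<bar> + (if j = i then 1 else 0)"
    proof (cases "j = i")
      case True
      then show ?thesis using abs_triangle_ineq4[of "ylift b0 j - int n * t'" \<sigma>] i(2) \<open>ylift b j - int n * (t' - s) = _\<close> by simp
    next
      case False
      then show ?thesis using \<open>ylift b j - int n * (t' - s) = _\<close> by simp
    qed
  qed
  also have "\<dots> = (\<Sum>j\<le>m. \<bar>ylift b0 j - int n * t'\<bar>) + 1"
    using i(1) by (simp add: sum.distrib sum.delta)
  finally show ?case using t' by (intro exI[of _ "t' - s"]) simp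
qed


lemma count_ge: "c \<le> Suc m \<Longrightarrow> (\<Sum>j\<le>m. (if c \<le> j then 1 else 0 :: int)) = int (Suc m - c)"
proof (induction m arbitrary: c)
  case 0
  then show ?case by (cases c) auto
next
  case (Suc m)
  show ?case
  proof (cases "c \<le> Suc m")
    case True
    then show ?thesis using Suc.IH[OF True] by simp
  next
    case False
    then have c: "c = Suc (Suc m)" using Suc.prems by simp
    have "(\<Sum>j\<le>Suc m. (if c \<le> j then 1 else 0 :: int)) = (\<Sum>j\<le>Suc m. 0)"
      by (intro sum.cong refl) (auto simp: c)
    then show ?thesis using c by simp
  qed
qed

lemma half_arith: "n * (m + 1) div 2 = (m + 1) * (n div 2) + (if odd n then (m + 1) div 2 else (0::nat))"
proof (cases "even n")
  case True
  then obtain a where "n = 2 * a" by blast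
  then show ?thesis by simp
next
  case False
  then obtain a where a: "n = 2 * a + 1" using oddE by blast
  have "n * (m + 1) = (m + 1) + 2 * (a * (m + 1))" unfolding a by (simp add: algebra_simps)
  then have "n * (m + 1) div 2 = (m + 1) div 2 + a * (m + 1)" by simp
  then show ?thesis using False a by simp
qed

definition ehigh :: "nat \<Rightarrow> nat \<Rightarrow> nat \<Rightarrow> int" where
  "ehigh n m j = int (n div 2) + (if odd n \<and> m + 1 - (m + 1) div 2 \<le> j then 1 else 0)"

lemma ehigh_valid: "yvalid m (ehigh n m)"
  unfolding yvalid_def ehigh_def by auto

lemma ehigh_sum: "(\<Sum>j\<le>m. ehigh n m j) = int (n * (m + 1) div 2)"
proof -
  have "(\<Sum>j\<le>m. ehigh n m j) = (\<Sum>j\<le>m. int (n div 2)) + (if odd n then (\<Sum>j\<le>m. (if m + 1 - (m + 1) div 2 \<le> j then 1 else 0 :: int)) else 0)"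
    unfolding ehigh_def by (simp add: sum.distrib)
  also have "\<dots> = int ((m + 1) * (n div 2) + (if odd n then (m + 1) div 2 else 0))"
    using count_ge[of "m + 1 - (m + 1) div 2" m] by (simp add: algebra_simps)
  finally show ?thesis using half_arith[of n m] by simp
qed

lemma lower:
  assumes n: "1 \<le> n" and k: "(yoke_adj n m ^^ k) (yV n m (\<lambda>_. 0)) (yV n m (ehigh n m))"
  shows "n * (m + 1) div 2 \<le> k"
proof -
  obtain t' where t': "(\<Sum>j\<le>m. \<bar>ylift (yV n m (ehigh n m)) j - int n * t'\<bar>) \<le> (\<Sum>j\<le>m. \<bar>ylift (yV n m (\<lambda>_. 0)) j - int n * 0\<bar>) + int k"
    using pot[OF n k] by blast
  have z: "(\<Sum>j\<le>m. \<bar>ylift (yV n m (\<lambda>_. 0)) j - int n * 0\<bar>) = 0"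
    using n by (intro sum.neutral) (simp add: ylift_yV)
  have e0: "0 \<le> ehigh n m 0" "ehigh n m 0 < int n"
    using n by (auto simp: ehigh_def)
  have ey: "\<And>j. j \<le> m \<Longrightarrow> ylift (yV n m (ehigh n m)) j = ehigh n m j"
    using ylift_yV[of "ehigh n m" n, OF e0] by blast
  have S: "(\<Sum>j\<le>m. \<bar>ehigh n m j - int n * t'\<bar>) \<le> int k"
    using t' z ey by simp
  define T where "T = n * (m + 1) div 2"
  have ST: "(\<Sum>j\<le>m. ehigh n m j) = int T" unfolding T_def by (rule ehigh_sum)
  have T2: "2 * T \<le> n * (m + 1)" unfolding T_def by simp
  have enn: "\<And>j. 0 \<le> ehigh n m j" by (simp add: ehigh_def)
  have "int T \<le> (\<Sum>j\<le>m. \<bar>ehigh n m j - int n * t'\<bar>)"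
  proof (cases "t' \<le> 0")
    case True
    have "(\<Sum>j\<le>m. ehigh n m j) \<le> (\<Sum>j\<le>m. \<bar>ehigh n m j - int n * t'\<bar>)"
    proof (intro sum_mono)
      fix j
      have "int n * t' \<le> 0" using True by (simp add: mult_nonneg_nonpos)
      then show "ehigh n m j \<le> \<bar>ehigh n m j - int n * t'\<bar>" by simp
    qed
    then show ?thesis using ST by simp
  next
    case False
    have "(\<Sum>j\<le>m. int n - ehigh n m j) \<le> (\<Sum>j\<le>m. \<bar>ehigh n m j - int n * t'\<bar>)"
    proof (intro sum_mono)
      fix j
      have "1 \<le> t'" using False by simp
      then have "int n * 1 \<le> int n * t'" by (intro mult_left_mono) auto
      then have "int n \<le> int n * t'" by simp
      then show "int n - ehigh n m j \<le> \<bar>ehigh n m j - int n * t'\<bar>" by simp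
    qed
    moreover have "(\<Sum>j\<le>m. int n - ehigh n m j) = int n * (int m + 1) - int T"
      using ST by (simp add: sum_subtractf algebra_simps)
    moreover have "2 * int T \<le> int n * (int m + 1)" using T2
      by (metis of_nat_1 of_nat_add of_nat_le_iff of_nat_mult of_nat_numeral)
    ultimately show ?thesis by linarith
  qed
  then show ?thesis using S unfolding T_def by linarith
qed

theorem theorem5p15:
  fixes n m :: nat
  assumes "1 \<le> n" and "m \<le> n"
  shows "yoke_diam n m = enat (n * (m + 1) div 2)"
proof (rule antisym)
  show "yoke_diam n m \<le> enat (n * (m + 1) div 2)"
    unfolding yoke_diam_def
  proof (rule SUP_least)
    fix p assume "p \<in> {(u, v). yoke_vert n m u \<and> yoke_vert n m v}"
    then have u: "yoke_vert n m (fst p)" and v: "yoke_vert n m (snd p)" by auto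
    obtain k where k: "2 * int k \<le> int n * (int m + 1)" "(yoke_adj n m ^^ k) (fst p) (snd p)"
      using upper[OF assms u v] by blast
    have "2 * k \<le> n * (m + 1)" using k(1)
      by (metis of_nat_1 of_nat_add of_nat_le_iff of_nat_mult of_nat_numeral)
    then have kT: "k \<le> n * (m + 1) div 2" by linarith
    have "yoke_dist n m (fst p) (snd p) \<le> enat k"
      unfolding yoke_dist_def by (rule INF_lower2[of k]) (use k(2) in auto)
    also have "\<dots> \<le> enat (n * (m + 1) div 2)" using kT by simp
    finally show "yoke_dist n m (fst p) (snd p) \<le> enat (n * (m + 1) div 2)" .
  qed
next
  define z where "z = yV n m (\<lambda>_. 0)"
  define w where "w = yV n m (ehigh n m)"
  have zv: "yoke_vert n m z" unfolding z_def using yV_vert[OF assms(1)] by (simp add: yvalid_def)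
  have wv: "yoke_vert n m w" unfolding w_def using yV_vert[OF assms(1) ehigh_valid] .
  have "enat (n * (m + 1) div 2) \<le> yoke_dist n m z w"
    unfolding yoke_dist_def
  proof (rule INF_greatest)
    fix k assume "k \<in> {k. (yoke_adj n m ^^ k) z w}"
    then have "n * (m + 1) div 2 \<le> k" using lower[OF assms(1)] unfolding z_def w_def by auto
    then show "enat (n * (m + 1) div 2) \<le> enat k" by simp
  qed
  also have "\<dots> \<le> yoke_diam n m"
    unfolding yoke_diam_def
    by (rule SUP_upper2[of "(z, w)"]) (use zv wv in auto)
  finally show "enat (n * (m + 1) div 2) \<le> yoke_diam n m" .
qed

end
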